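(* For every measure $\mathfrak{n}\in\mathcal{R}_d$: (1) the set $\mathfrak{G}^*\setminus\mathfrak{G}(\mathfrak{n})$ is left-open; (2) the set $\mathfrak{G}(\mathfrak{n})$ is right-open and nonempty.
   Context: A gauge function is a function $g:[0,\infty]\to[0,\infty]$ that is nondecreasing on a neighbourhood of $0$ and satisfies $\lim_{r\to0}g(r)=g(0)=0$, $g(\infty)=\infty$; $\mathfrak{G}$ denotes the set of gauge functions. The $d$-normalization of $g$ is $g_d(r)=r^d\inf_{0<\rho\le r}g(\rho)/\rho^d$ for $r\in(0,\infty)$, $g_d(0)=0$, $g_d(\infty)=\infty$. Let $\ell_g=\liminf_{r\to0}g(r)/r^d$, $\mathfrak{G}^\infty=\{g\in\mathfrak{G}:\ell_g=\infty\}$, $\mathfrak{G}^*=\{g\in\mathfrak{G}:\ell_g\in(0,\infty]\}$. For $d$-normalized gauge functions $g,h$ (i.e. coinciding with their $d$-normalizations near $0$) write $h\prec g$ if $h(r)/g(r)$ increases monotonically to $\infty$ as $r\downarrow0$ (with the convention that $h\prec g$ for every $h$ if $g$ vanishes on a neighbourhood of $0$). Let $\mathcal{R}$ be the set of positive Borel measures $\mathfrak{n}$ on $(0,1]$ with infinite total mass and $\mathfrak{n}([\rho,1])<\infty$ for all $\rho\in(0,1]$, and $\mathcal{R}_d=\{\mathfrak{n}\in\mathcal{R}:\int_{(0,1]}r^d\,\mathfrak{n}(dr)<\infty\}$. For $\mathfrak{n}\in\mathcal{R}_d$, $\mathfrak{G}(\mathfrak{n})=\{g\in\mathfrak{G}^\infty:\int_{(0,1]}g_d\,d\mathfrak{n}=\infty\}$.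 A subset $\mathfrak{H}\subseteq\mathfrak{G}^*$ is $d$-normalized if for every $g\in\mathfrak{G}^*$, $g\in\mathfrak{H}$ iff $g_d\in\mathfrak{H}$; it is left-open if it is $d$-normalized and for every $g\in\mathfrak{H}$ there is $\overline g\in\mathfrak{H}$ with $\overline g_d\prec g_d$; it is right-open if it is $d$-normalized, contained in $\mathfrak{G}^\infty$, and for every $g\in\mathfrak{H}$ there is $\underline g\in\mathfrak{H}$ with $g_d\prec\underline g_d$. *)

theory Defs
  imports "HOL-Analysis.Analysis"
begin

definition gauge :: "(ennreal \<Rightarrow> ennreal) set" where
  "gauge = {g. (\<exists>\<epsilon>>0. mono_on {0..\<epsilon>} g) \<and> (g \<longlongrightarrow> 0) (at_right 0)
              \<and> g 0 = 0 \<and> g top = top}"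

definition dnorm :: "nat \<Rightarrow> (ennreal \<Rightarrow> ennreal) \<Rightarrow> ennreal \<Rightarrow> ennreal" where
  "dnorm d g r = (if r = 0 then 0 else if r = top then top
                  else r ^ d * (INF \<rho>\<in>{0<..r}. g \<rho> / \<rho> ^ d))"

definition ell :: "nat \<Rightarrow> (ennreal \<Rightarrow> ennreal) \<Rightarrow> ennreal" where
  "ell d g = Liminf (at_right 0) (\<lambda>r. g r / r ^ d)"

definition gauge_inf :: "nat \<Rightarrow> (ennreal \<Rightarrow> ennreal) set" where
  "gauge_inf d = {g \<in> gauge. ell d g = top}"

definition gauge_star :: "nat \<Rightarrow> (ennreal \<Rightarrow> ennreal) set" where
  "gauge_star d = {g \<in> gauge. ell d g > 0}"

definition gprec :: "(ennreal \<Rightarrow> ennreal) \<Rightarrow> (ennreal \<Rightarrow> ennreal) \<Rightarrow> bool" where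
  "gprec h g \<longleftrightarrow>
     (\<exists>\<epsilon>>0. \<forall>r. 0 < r \<and> r < \<epsilon> \<longrightarrow> g r = 0) \<or>
     (\<exists>\<epsilon>>0. (\<forall>r s. 0 < r \<and> r \<le> s \<and> s < \<epsilon> \<longrightarrow> h s / g s \<le> h r / g r) \<and>
            ((\<lambda>r. h r / g r) \<longlongrightarrow> top) (at_right 0))"

definition meas_R :: "real measure set" where
  "meas_R = {M. sets M = sets (restrict_space borel {0<..1}) \<and>
                emeasure M {0<..1} = \<infinity> \<and>
                (\<forall>\<rho>\<in>{0<..1}. emeasure M {\<rho>..1} < \<infinity>)}"

definition meas_Rd :: "nat \<Rightarrow> real measure set" where
  "meas_Rd d = {M \<in> meas_R. (\<integral>\<^sup>+ r. ennreal (r ^ d) \<partial>M) < \<infinity>}"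

definition gauge_n :: "nat \<Rightarrow> real measure \<Rightarrow> (ennreal \<Rightarrow> ennreal) set" where
  "gauge_n d M = {g \<in> gauge_inf d. (\<integral>\<^sup>+ r. dnorm d g (ennreal r) \<partial>M) = \<infinity>}"

definition d_normalized :: "nat \<Rightarrow> (ennreal \<Rightarrow> ennreal) set \<Rightarrow> bool" where
  "d_normalized d H \<longleftrightarrow> H \<subseteq> gauge_star d \<and>
     (\<forall>g\<in>gauge_star d. g \<in> H \<longleftrightarrow> dnorm d g \<in> H)"

definition left_open :: "nat \<Rightarrow> (ennreal \<Rightarrow> ennreal) set \<Rightarrow> bool" where
  "left_open d H \<longleftrightarrow> d_normalized d H \<and>
     (\<forall>g\<in>H. \<exists>g'\<in>H. gprec (dnorm d g') (dnorm d g))"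

definition right_open :: "nat \<Rightarrow> (ennreal \<Rightarrow> ennreal) set \<Rightarrow> bool" where
  "right_open d H \<longleftrightarrow> d_normalized d H \<and> H \<subseteq> gauge_inf d \<and>
     (\<forall>g\<in>H. \<exists>g'\<in>H. gprec (dnorm d g) (dnorm d g'))"

end

theory Submission
  imports Defs
begin


lemma ediv_mult: fixes a c :: ennreal assumes "c \<noteq> 0" "c \<noteq> top" shows "a / c * c = a"
  using assms by (simp add: ennreal_divide_times ennreal_divide_self top.not_eq_extremum)

lemma ediv_le_iff: fixes a b c :: ennreal assumes "c \<noteq> 0" "c \<noteq> top"
  shows "a / c \<le> b \<longleftrightarrow> a \<le> b * c"
proof -
  have "a / c \<le> b \<longleftrightarrow> c * (a / c) \<le> c * b" using ennreal_mult_le_mult_iff[OF assms] by simp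
  also have "c * (a / c) = a" using ediv_mult[OF assms, of a] by (simp add: mult.commute)
  finally show ?thesis by (simp add: mult.commute)
qed

lemma le_ediv_iff: fixes a b c :: ennreal assumes "c \<noteq> 0" "c \<noteq> top"
  shows "b \<le> a / c \<longleftrightarrow> b * c \<le> a"
proof -
  have "b \<le> a / c \<longleftrightarrow> c * b \<le> c * (a / c)" using ennreal_mult_le_mult_iff[OF assms] by simp
  also have "c * (a / c) = a" using ediv_mult[OF assms, of a] by (simp add: mult.commute)
  finally show ?thesis by (simp add: mult.commute)
qed

lemma mult_ediv: fixes a c :: ennreal assumes "c \<noteq> 0" "c \<noteq> top" shows "c * (a / c) = a"
  using ediv_mult[OF assms, of a] by (simp add: mult.commute)

lemma mult_INF_ennreal: fixes c :: ennreal assumes "c \<noteq> 0" "c \<noteq> top"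
  shows "c * (INF i\<in>I. f i) = (INF i\<in>I. c * f i)"
proof (rule antisym)
  show "c * (INF i\<in>I. f i) \<le> (INF i\<in>I. c * f i)"
    by (rule INF_greatest, rule mult_left_mono) (auto intro: INF_lower)
  have "(INF i\<in>I. c * f i) / c \<le> (INF i\<in>I. f i)"
  proof (rule INF_greatest)
    fix i assume "i \<in> I"
    then have "(INF i\<in>I. c * f i) \<le> f i * c" by (metis INF_lower mult.commute)
    then show "(INF i\<in>I. c * f i) / c \<le> f i" using ediv_le_iff[OF assms] by blast
  qed
  then show "(INF i\<in>I. c * f i) \<le> c * (INF i\<in>I. f i)"
    using ediv_le_iff[OF assms] by (simp add: mult.commute)
qed

lemma pow_nz: fixes r :: ennreal assumes "0 < r" "r < top" shows "r ^ d \<noteq> 0" "r ^ d \<noteq> top"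
  using assms by (auto simp: power_less_top_ennreal top.not_eq_extremum)

lemma at_right_0_ennreal_nbot: "at_right (0::ennreal) \<noteq> bot"
proof
  assume "at_right (0::ennreal) = bot"
  then have "eventually (\<lambda>x. False) (at_right (0::ennreal))" by simp
  then obtain b :: ennreal where b: "b > 0" "\<forall>y>0. y < b \<longrightarrow> False"
    using eventually_at_right[of "0::ennreal" 1] by auto
  then obtain z where "0 < z" "z < b" using dense by blast
  then show False using b by auto
qed

lemma ev_at_right0: fixes P :: "ennreal \<Rightarrow> bool"
  shows "eventually P (at_right 0) \<longleftrightarrow> (\<exists>b>0. \<forall>y. 0 < y \<longrightarrow> y < b \<longrightarrow> P y)"
  using eventually_at_right[of "0::ennreal" 1] by auto



definition hinf :: "nat \<Rightarrow> (ennreal \<Rightarrow> ennreal) \<Rightarrow> ennreal \<Rightarrow> ennreal" where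
  "hinf d g r = (INF \<rho>\<in>{0<..r}. g \<rho> / \<rho> ^ d)"

lemma dnorm_eq: "0 < r \<Longrightarrow> r < top \<Longrightarrow> dnorm d g r = r ^ d * hinf d g r"
  by (auto simp: dnorm_def hinf_def)

lemma hinf_anti: "r \<le> s \<Longrightarrow> hinf d g s \<le> hinf d g r"
  unfolding hinf_def by (rule INF_superset_mono) auto

lemma hinf_lower: "0 < \<rho> \<Longrightarrow> \<rho> \<le> r \<Longrightarrow> hinf d g r \<le> g \<rho> / \<rho> ^ d"
  unfolding hinf_def by (rule INF_lower) auto

lemma hinf_zero: "hinf d g 0 = top"
  unfolding hinf_def by simp

lemma dnorm_div: "0 < r \<Longrightarrow> r < top \<Longrightarrow> dnorm d g r / r ^ d = hinf d g r"
  using dnorm_eq[of r d g] pow_nz[of r d] ennreal_mult_divide_eq[of "r^d" "hinf d g r"]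
  by (simp add: mult.commute)

lemma dnorm_le: assumes "0 < r" "r < top" shows "dnorm d g r \<le> g r"
proof -
  have "dnorm d g r = r ^ d * hinf d g r" using dnorm_eq assms by blast
  also have "\<dots> \<le> r ^ d * (g r / r ^ d)" by (rule mult_left_mono) (use hinf_lower assms in auto)
  also have "\<dots> = g r" using mult_ediv pow_nz assms by blast
  finally show ?thesis .
qed

lemma hinf_eq_antitone:
  assumes "0 < r" "\<And>\<rho>. 0 < \<rho> \<Longrightarrow> \<rho> \<le> r \<Longrightarrow> g r / r ^ d \<le> g \<rho> / \<rho> ^ d"
  shows "hinf d g r = g r / r ^ d"
  using assms unfolding hinf_def by (intro antisym INF_lower INF_greatest) auto

lemma dnorm_eq_self:
  assumes "0 < r" "r < top" "\<And>\<rho>. 0 < \<rho> \<Longrightarrow> \<rho> \<le> r \<Longrightarrow> g r / r ^ d \<le> g \<rho> / \<rho> ^ d"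
  shows "dnorm d g r = g r"
  using dnorm_eq[of r d g] hinf_eq_antitone[of r g d] assms mult_ediv pow_nz by metis

lemma ell_ev: assumes "y < ell d g"
  shows "\<exists>b>0. \<forall>r. 0 < r \<longrightarrow> r < b \<longrightarrow> y < g r / r ^ d"
proof -
  have "eventually (\<lambda>r. y < g r / r ^ d) (at_right 0)"
    using assms le_Liminf_iff[of "ell d g" "at_right 0" "\<lambda>r. g r / r ^ d"] unfolding ell_def by auto
  then show ?thesis using ev_at_right0 by auto
qed

lemma hinf_le_ell: assumes "0 < r" shows "hinf d g r \<le> ell d g"
  unfolding ell_def le_Liminf_iff
proof (intro allI impI)
  fix y assume y: "y < hinf d g r"
  show "\<forall>\<^sub>F x in at_right 0. y < g x / x ^ d"
    unfolding ev_at_right0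
  proof (intro exI[of _ r] conjI allI impI)
    fix x :: ennreal assume "0 < x" "x < r"
    then have "hinf d g r \<le> g x / x ^ d" by (intro hinf_lower) auto
    then show "y < g x / x ^ d" using y by simp
  qed (use assms in auto)
qed

lemma hinf_ev: assumes "y < ell d g"
  shows "\<exists>b>0. \<forall>r. 0 < r \<longrightarrow> r < b \<longrightarrow> y \<le> hinf d g r"
proof -
  obtain b where b: "b > 0" "\<forall>r. 0 < r \<longrightarrow> r < b \<longrightarrow> y < g r / r ^ d" using ell_ev[OF assms] by blast
  show ?thesis
  proof (intro exI[of _ b] conjI allI impI)
    fix r :: ennreal assume "0 < r" "r < b"
    then show "y \<le> hinf d g r" unfolding hinf_def using b
      by (intro INF_greatest) (auto intro!: less_imp_le)
  qed (use b in auto)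
qed

lemma hinf_ev_less: assumes "y < ell d g"
  shows "\<exists>b>0. \<forall>r. 0 < r \<longrightarrow> r < b \<longrightarrow> y < hinf d g r"
proof -
  obtain z where "y < z" "z < ell d g" using dense assms by blast
  then show ?thesis using hinf_ev[of z d g] by (meson order.strict_trans2)
qed

lemma ell_dnorm: "ell d (dnorm d g) = ell d g"
proof -
  have "ell d (dnorm d g) = Liminf (at_right 0) (hinf d g)"
    unfolding ell_def
  proof (rule Liminf_eq)
    show "\<forall>\<^sub>F x in at_right 0. dnorm d g x / x ^ d = hinf d g x"
      unfolding ev_at_right0 by (intro exI[of _ 1]) (auto intro!: dnorm_div dest: order.strict_trans[OF _ ennreal_one_less_top])
  qed
  also have "\<dots> = ell d g"
  proof (rule antisym)
    show "Liminf (at_right 0) (hinf d g) \<le> ell d g"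
      unfolding ell_def
      by (rule Liminf_mono) (auto simp: ev_at_right0 intro!: exI[of _ 1] hinf_lower)
    show "ell d g \<le> Liminf (at_right 0) (hinf d g)"
      unfolding le_Liminf_iff ev_at_right0 using hinf_ev_less by blast
  qed
  finally show ?thesis .
qed

lemma hinf_top: assumes "ell d g = top" shows "(hinf d g \<longlongrightarrow> top) (at_right 0)"
  unfolding order_tendsto_iff
proof (intro conjI allI impI)
  fix y :: ennreal assume "y < top"
  then show "\<forall>\<^sub>F x in at_right 0. y < hinf d g x"
    unfolding ev_at_right0 using hinf_ev_less[of y d g] assms by auto
qed (auto simp: top.not_eq_extremum)

lemma hinf_pos: assumes "0 < ell d g" shows "\<exists>b>0. \<forall>r. 0 < r \<longrightarrow> r < b \<longrightarrow> 0 < hinf d g r"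
  using hinf_ev_less[OF assms] .



lemma dnorm_zero[simp]: "dnorm d g 0 = 0" and dnorm_top[simp]: "dnorm d g top = top"
  by (auto simp: dnorm_def)

lemma dnorm_mono:
  assumes mono: "mono_on {0..\<epsilon>} g" and "0 < r" "r \<le> s" "s \<le> \<epsilon>" "s < top"
  shows "dnorm d g r \<le> dnorm d g s"
proof -
  have r: "0 < r" "r < top" and s: "0 < s" "s < top" using assms by auto
  have "r ^ d * hinf d g r \<le> (INF \<rho>\<in>{0<..s}. s ^ d * (g \<rho> / \<rho> ^ d))"
  proof (rule INF_greatest)
    fix \<rho> assume \<rho>: "\<rho> \<in> {0<..s}"
    have fr: "r ^ d \<le> s ^ d" using assms by (intro power_mono) auto
    show "r ^ d * hinf d g r \<le> s ^ d * (g \<rho> / \<rho> ^ d)"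
    proof (cases "\<rho> \<le> r")
      case True
      then have "r ^ d * hinf d g r \<le> r ^ d * (g \<rho> / \<rho> ^ d)"
        using \<rho> by (intro mult_left_mono hinf_lower) auto
      also have "\<dots> \<le> s ^ d * (g \<rho> / \<rho> ^ d)" using fr by (rule mult_right_mono) auto
      finally show ?thesis .
    next
      case False
      have "r ^ d * hinf d g r = dnorm d g r" using dnorm_eq r by metis
      also have "\<dots> \<le> g r" using dnorm_le r by blast
      also have "\<dots> \<le> g \<rho>" using mono False \<rho> assms by (intro mono_onD[OF mono]) auto
      also have "\<dots> = \<rho> ^ d * (g \<rho> / \<rho> ^ d)" using pow_nz[of \<rho> d] \<rho> s
        by (intro mult_ediv[symmetric]) (auto dest: order.strict_trans1[of \<rho> s top])
      also have "\<dots> \<le> s ^ d * (g \<rho> / \<rho> ^ d)" using \<rho> by (intro mult_right_mono power_mono) auto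
      finally show ?thesis .
    qed
  qed
  also have "\<dots> = s ^ d * hinf d g s" unfolding hinf_def using pow_nz[OF s]
    by (intro mult_INF_ennreal[symmetric]) auto
  finally show ?thesis using dnorm_eq r s by metis
qed

lemma dnorm_gauge: assumes "g \<in> gauge" shows "dnorm d g \<in> gauge"
proof -
  obtain \<epsilon> where \<epsilon>: "\<epsilon> > 0" "mono_on {0..\<epsilon>} g" and lim: "(g \<longlongrightarrow> 0) (at_right 0)"
    using assms unfolding gauge_def by auto
  define e where "e = min \<epsilon> 1"
  have e: "e > 0" "e < top" "e \<le> \<epsilon>" using \<epsilon> by (auto simp: e_def min_def dest: order.strict_trans1[OF _ ennreal_one_less_top])
  have "mono_on {0..e} (dnorm d g)"
  proof (rule mono_onI)
    fix r s assume rs: "r \<in> {0..e}" "s \<in> {0..e}" "r \<le> s"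
    show "dnorm d g r \<le> dnorm d g s"
    proof (cases "r = 0")
      case False
      then show ?thesis using rs e \<epsilon> by (intro dnorm_mono[of \<epsilon> g]) (auto simp: zero_less_iff_neq_zero)
    qed simp
  qed
  moreover have "(dnorm d g \<longlongrightarrow> 0) (at_right 0)"
  proof (rule tendsto_sandwich[OF _ _ tendsto_const lim])
    show "\<forall>\<^sub>F n in at_right 0. 0 \<le> dnorm d g n" by simp
    show "\<forall>\<^sub>F n in at_right 0. dnorm d g n \<le> g n"
      unfolding ev_at_right0
      by (intro exI[of _ 1]) (auto intro!: dnorm_le dest: order.strict_trans[OF _ ennreal_one_less_top])
  qed
  ultimately show ?thesis using e unfolding gauge_def by auto
qed

lemma dnorm_idem: "dnorm d (dnorm d g) = dnorm d g"
proof
  fix r :: ennreal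
  show "dnorm d (dnorm d g) r = dnorm d g r"
  proof (cases "r = 0 \<or> r = top")
    case False
    then have r: "0 < r" "r < top" by (auto simp: top.not_eq_extremum zero_less_iff_neq_zero)
    show ?thesis
    proof (rule dnorm_eq_self[OF r])
      fix \<rho> :: ennreal assume "0 < \<rho>" "\<rho> \<le> r"
      then show "dnorm d g r / r ^ d \<le> dnorm d g \<rho> / \<rho> ^ d"
        using r by (simp add: dnorm_div hinf_anti)
    qed
  qed auto
qed

lemma gauge_star_dnorm: "g \<in> gauge_star d \<Longrightarrow> dnorm d g \<in> gauge_star d"
  by (auto simp: gauge_star_def dnorm_gauge ell_dnorm)

lemma gauge_inf_dnorm: "g \<in> gauge \<Longrightarrow> dnorm d g \<in> gauge_inf d \<longleftrightarrow> g \<in> gauge_inf d"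
  by (auto simp: gauge_inf_def dnorm_gauge ell_dnorm)

lemma gauge_n_dnorm: "g \<in> gauge \<Longrightarrow> dnorm d g \<in> gauge_n d M \<longleftrightarrow> g \<in> gauge_n d M"
  by (auto simp: gauge_n_def gauge_inf_dnorm dnorm_idem)

lemma gauge_n_sub: "gauge_n d M \<subseteq> gauge_star d"
  by (auto simp: gauge_n_def gauge_inf_def gauge_star_def)

lemma dnorm_gauge_n: "d_normalized d (gauge_n d M)"
  unfolding d_normalized_def using gauge_n_sub gauge_n_dnorm
  by (auto simp: gauge_star_def)

lemma dnorm_compl: "d_normalized d (gauge_star d - gauge_n d M)"
  unfolding d_normalized_def using gauge_n_dnorm gauge_star_dnorm
  by (auto simp: gauge_star_def)



lemma down_closed_borel:
  fixes S :: "real set" assumes dc: "\<And>x y. y \<in> S \<Longrightarrow> x \<le> y \<Longrightarrow> x \<in> S"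
  shows "S \<in> sets borel"
proof (cases "S = {}")
  case False
  show ?thesis
  proof (cases "bdd_above S")
    case True
    define c where "c = Sup S"
    have up: "x \<in> S \<Longrightarrow> x \<le> c" for x using True c_def by (simp add: cSup_upper)
    show ?thesis
    proof (cases "c \<in> S")
      case True
      then have "S = {..c}" using dc up by auto
      then show ?thesis by simp
    next
      case cn: False
      have "S = {..<c}"
      proof safe
        fix x assume "x \<in> S" then show "x < c" using up cn by (metis order_less_le)
      next
        fix x assume "x < c"
        then obtain y where "y \<in> S" "x < y" using less_cSup_iff[OF False True] c_def by auto
        then show "x \<in> S" using dc by auto
      qed
      then show ?thesis by simp
    qed
  next
    case False
    have "S = UNIV"
    proof safe
      fix x
      from False obtain y where "y \<in> S" "x < y" unfolding bdd_above_def by (meson not_le)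
      then show "x \<in> S" using dc by auto
    qed simp
    then show ?thesis by simp
  qed
qed simp

lemma antitone_measurable:
  fixes f :: "real \<Rightarrow> ennreal" assumes "\<And>x y. x \<le> y \<Longrightarrow> f y \<le> f x"
  shows "f \<in> borel_measurable borel"
proof (rule borel_measurableI_greater)
  fix y
  have "{x. y < f x} \<in> sets borel"
    by (rule down_closed_borel) (use assms in \<open>auto intro: less_le_trans\<close>)
  then show "{x \<in> space borel. y < f x} \<in> sets borel" by simp
qed

lemma antitone_comp_ennreal:
  fixes h :: "ennreal \<Rightarrow> ennreal" assumes "\<And>x y. x \<le> y \<Longrightarrow> h y \<le> h x"
  shows "(\<lambda>r. h (ennreal r)) \<in> borel_measurable borel"
  by (rule antitone_measurable) (use assms ennreal_leI in blast)

locale MR =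
  fixes d :: nat and M :: "real measure"
  assumes MR: "M \<in> meas_Rd d"
begin

lemma sets_M: "sets M = sets (restrict_space borel {0<..1})"
  using MR by (auto simp: meas_Rd_def meas_R_def)

lemma space_M: "space M = {0<..1}"
  using sets_eq_imp_space_eq[OF sets_M] by (simp add: space_restrict_space)

lemma meas_inf: "emeasure M {0<..1} = \<infinity>"
  using MR by (auto simp: meas_Rd_def meas_R_def)

lemma meas_fin: "\<rho> \<in> {0<..1} \<Longrightarrow> emeasure M {\<rho>..1} < \<infinity>"
  using MR by (auto simp: meas_Rd_def meas_R_def)

lemma meas_borel: "f \<in> borel_measurable borel \<Longrightarrow> f \<in> borel_measurable M"
  using measurable_cong_sets[OF sets_M refl] measurable_restrict_space1 by blast

lemma int_pow: "(\<integral>\<^sup>+ r. ennreal r ^ d \<partial>M) < \<infinity>"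
proof -
  have "(\<integral>\<^sup>+ r. ennreal r ^ d \<partial>M) = (\<integral>\<^sup>+ r. ennreal (r ^ d) \<partial>M)"
    by (rule nn_integral_cong) (auto simp: space_M ennreal_power)
  then show ?thesis using MR by (simp add: meas_Rd_def)
qed

lemma d_pos: "1 \<le> d"
proof (rule ccontr)
  assume "\<not> 1 \<le> d" then have "d = 0" by simp
  then have "(\<integral>\<^sup>+ r. ennreal r ^ d \<partial>M) = emeasure M (space M)" by simp
  also have "\<dots> = \<infinity>" using meas_inf space_M by simp
  finally show False using int_pow by simp
qed

lemma meas_pow[measurable]: "(\<lambda>r. ennreal r ^ d) \<in> borel_measurable M"
  by (intro meas_borel) measurable

end



definition Fa :: "(nat \<Rightarrow> real) \<Rightarrow> ennreal \<Rightarrow> ennreal" where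
  "Fa a y = (INF k. y * ennreal (1 / real (Suc k)) + ennreal (a k))"

definition aok :: "(nat \<Rightarrow> real) \<Rightarrow> bool" where
  "aok a \<longleftrightarrow> mono a \<and> (\<forall>k. real (Suc k) \<le> a k)"

lemma Fa_upper: "Fa a y \<le> y * ennreal (1 / real (Suc K)) + ennreal (a K)"
  unfolding Fa_def by (rule INF_lower) auto

lemma Fa_mono: assumes "y \<le> y'" shows "Fa a y \<le> Fa a y'"
  unfolding Fa_def[of a y']
proof (rule INF_greatest)
  fix k
  have "Fa a y \<le> y * ennreal (1 / real (Suc k)) + ennreal (a k)" by (rule Fa_upper)
  also have "\<dots> \<le> y' * ennreal (1 / real (Suc k)) + ennreal (a k)"
    using assms by (intro add_right_mono mult_right_mono) auto
  finally show "Fa a y \<le> y' * ennreal (1 / real (Suc k)) + ennreal (a k)" .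
qed

lemma Fa_ge1: assumes "aok a" shows "1 \<le> Fa a y"
  unfolding Fa_def
proof (rule INF_greatest)
  fix k
  have "real (Suc k) \<le> a k" using assms unfolding aok_def by blast
  then have "1 \<le> a k" by simp
  then have "(1::ennreal) \<le> ennreal (a k)" using ennreal_leI[of 1 "a k"] by simp
  also have "\<dots> \<le> y * ennreal (1 / real (Suc k)) + ennreal (a k)" by simp
  finally show "1 \<le> y * ennreal (1 / real (Suc k)) + ennreal (a k)" .
qed

lemma Fa_fin: assumes "y < top" shows "Fa a y < top"
proof -
  have "Fa a y \<le> y * ennreal (1 / real (Suc 0)) + ennreal (a 0)" by (rule Fa_upper)
  also have "\<dots> = y + ennreal (a 0)" by simp
  also have "\<dots> < top" using assms by (simp add: ennreal_add_less_top)
  finally show ?thesis .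
qed

lemma Fa_lower: assumes "aok a"
  shows "min (y * ennreal (1 / real (Suc K))) (ennreal (a K)) \<le> Fa a y"
  unfolding Fa_def
proof (rule INF_greatest)
  fix k
  show "min (y * ennreal (1 / real (Suc K))) (ennreal (a K)) \<le> y * ennreal (1 / real (Suc k)) + ennreal (a k)"
  proof (cases "k \<le> K")
    case True
    have "y * ennreal (1 / real (Suc K)) \<le> y * ennreal (1 / real (Suc k))"
      using True by (intro mult_left_mono ennreal_leI) (auto simp: frac_le)
    also have "\<dots> \<le> y * ennreal (1 / real (Suc k)) + ennreal (a k)" by simp
    finally show ?thesis by (simp add: min.coboundedI1)
  next
    case False
    have "ennreal (a K) \<le> ennreal (a k)" using False assms unfolding aok_def
      by (intro ennreal_leI) (simp add: monoD)
    also have "\<dots> \<le> y * ennreal (1 / real (Suc k)) + ennreal (a k)" by simp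
    finally show ?thesis by (simp add: min.coboundedI2)
  qed
qed

lemma Fa_scale:
  assumes "c \<le> c'" "c' < top" "c * y \<le> c' * y'"
  shows "c * Fa a y \<le> c' * Fa a y'"
proof (cases "c' = 0")
  case True then show ?thesis using assms by simp
next
  case False
  have "c * Fa a y \<le> (INF k. c' * (y' * ennreal (1 / real (Suc k)) + ennreal (a k)))"
  proof (rule INF_greatest)
    fix k
    have "c * Fa a y \<le> c * (y * ennreal (1 / real (Suc k)) + ennreal (a k))"
      by (intro mult_left_mono Fa_upper) auto
    also have "\<dots> = (c * y) * ennreal (1 / real (Suc k)) + c * ennreal (a k)"
      by (simp add: distrib_left mult.assoc)
    also have "\<dots> \<le> (c' * y') * ennreal (1 / real (Suc k)) + c' * ennreal (a k)"
      using assms by (intro add_mono mult_right_mono) auto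
    also have "\<dots> = c' * (y' * ennreal (1 / real (Suc k)) + ennreal (a k))"
      by (simp add: distrib_left mult.assoc)
    finally show "c * Fa a y \<le> c' * (y' * ennreal (1 / real (Suc k)) + ennreal (a k))" .
  qed
  also have "\<dots> = c' * Fa a y'" unfolding Fa_def using False assms
    by (intro mult_INF_ennreal[symmetric]) auto
  finally show ?thesis .
qed

lemma Fa_ratio: assumes "y' \<le> y" "y < top" shows "y' * Fa a y \<le> y * Fa a y'"
  using assms by (intro Fa_scale) (auto simp: mult.commute)

lemma Fa_top: assumes "aok a" "(h \<longlongrightarrow> top) F" shows "((\<lambda>x. Fa a (h x)) \<longlongrightarrow> top) F"
  unfolding tendsto_top_iff_ennreal
proof (intro allI impI)
  fix l :: real assume "0 \<le> l"
  obtain N :: nat where N: "l < real N" using reals_Archimedean2 by blast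
  have "eventually (\<lambda>x. ennreal (real N * real (Suc N)) < h x) F"
    using assms(2) unfolding tendsto_top_iff_ennreal by auto
  then show "eventually (\<lambda>x. ennreal l < Fa a (h x)) F"
  proof eventually_elim
    case (elim x)
    have "ennreal l < ennreal (real N)" using N \<open>0 \<le> l\<close> by (simp add: ennreal_less_iff)
    also have "ennreal (real N) \<le> min (h x * ennreal (1 / real (Suc N))) (ennreal (a N))"
    proof (rule min.boundedI)
      have "ennreal (real N) = ennreal (real N * real (Suc N)) * ennreal (1 / real (Suc N))"
        by (simp add: ennreal_mult[symmetric])
      also have "\<dots> \<le> h x * ennreal (1 / real (Suc N))"
        using elim by (intro mult_right_mono) auto
      finally show "ennreal (real N) \<le> h x * ennreal (1 / real (Suc N))" .
      show "ennreal (real N) \<le> ennreal (a N)" using assms(1) unfolding aok_def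
        by (intro ennreal_leI) (metis of_nat_Suc of_nat_le_iff le_add2 plus_1_eq_Suc order_trans)
    qed
    also have "\<dots> \<le> Fa a (h x)" by (rule Fa_lower[OF assms(1)])
    finally show ?case by simp
  qed
qed

lemma Fa_ratio_big: assumes "aok a"
  shows "\<exists>Y::real. \<forall>y. ennreal Y \<le> y \<longrightarrow> y < top \<longrightarrow> of_nat N \<le> y / Fa a y"
proof -
  define K where "K = 2 * N + 1"
  define Y where "Y = real (Suc K) * a K"
  have aK: "0 \<le> a K" using assms unfolding aok_def by (meson of_nat_0_le_iff order_trans)
  show ?thesis
  proof (intro exI[of _ Y] allI impI)
    fix y :: ennreal assume y: "ennreal Y \<le> y" "y < top"
    obtain t where t: "y = ennreal t" "0 \<le> t" using y by (cases y) auto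
    have tY: "Y \<le> t" using y t by (simp add: ennreal_le_iff)
    have F0: "Fa a y \<noteq> 0" using Fa_ge1[OF assms, of y] by auto
    have Ft: "Fa a y \<noteq> top" using Fa_fin[of y a] y by auto
    have "of_nat N * Fa a y \<le> of_nat N * (y * ennreal (1 / real (Suc K)) + ennreal (a K))"
      by (intro mult_left_mono Fa_upper) auto
    also have "\<dots> = ennreal (real N * (t / real (Suc K) + a K))"
    proof -
      have e1: "y * ennreal (1/real(Suc K)) = ennreal (t / real (Suc K))"
        using t by (simp add: ennreal_mult[symmetric])
      have e2: "ennreal (t / real (Suc K)) + ennreal (a K) = ennreal (t / real (Suc K) + a K)"
        using t aK by (simp add: ennreal_plus)
      have e3: "(of_nat N::ennreal) * ennreal (t / real (Suc K) + a K) = ennreal (real N * (t / real (Suc K) + a K))"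
        using t aK by (simp add: ennreal_mult ennreal_of_nat_eq_real_of_nat)
      show ?thesis using e1 e2 e3 by simp
    qed
    also have "\<dots> \<le> ennreal t"
    proof (rule ennreal_leI)
      have "a K \<le> t / real (Suc K)" using tY by (simp add: Y_def field_simps)
      then have "real N * (t / real (Suc K) + a K) \<le> real N * (2 * (t / real (Suc K)))"
        by (intro mult_left_mono) auto
      also have "\<dots> = t * (2 * real N / real (Suc K))" by simp
      also have "\<dots> \<le> t * 1" using t by (intro mult_left_mono) (auto simp: K_def)
      finally show "real N * (t / real (Suc K) + a K) \<le> t" by simp
    qed
    finally show "of_nat N \<le> y / Fa a y" using t le_ediv_iff[OF F0 Ft] by (simp add: mult.commute)
  qed
qed

lemma Fa_ratio_top: assumes "aok a" "(h \<longlongrightarrow> top) F" "eventually (\<lambda>x. h x < top) F"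
  shows "((\<lambda>x. h x / Fa a (h x)) \<longlongrightarrow> top) F"
  unfolding tendsto_top_iff_ennreal
proof (intro allI impI)
  fix l :: real assume "0 \<le> l"
  obtain N :: nat where N: "l < real N" using reals_Archimedean2 by blast
  obtain Y where Y: "\<forall>y. ennreal Y \<le> y \<longrightarrow> y < top \<longrightarrow> of_nat N \<le> y / Fa a y"
    using Fa_ratio_big[OF assms(1)] by blast
  have "eventually (\<lambda>x. ennreal Y < h x) F" using assms(2) unfolding tendsto_top_iff_ennreal
    by (cases "0 \<le> Y") (auto elim: eventually_mono simp: ennreal_neg)
  with assms(3) show "eventually (\<lambda>x. ennreal l < h x / Fa a (h x)) F"
  proof eventually_elim
    case (elim x)
    have "ennreal l < of_nat N" using N \<open>0 \<le> l\<close> by (simp add: ennreal_of_nat_eq_real_of_nat ennreal_less_iff)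
    also have "\<dots> \<le> h x / Fa a (h x)" using Y elim by auto
    finally show ?case .
  qed
qed



lemma SUP_min_nat: "(SUP n. min y (of_nat n)) = (y::ennreal)"
proof (rule antisym)
  show "(SUP n. min y (of_nat n)) \<le> y" by (rule SUP_least) simp
  show "y \<le> (SUP n. min y (of_nat n))"
  proof (cases "y = top")
    case True
    have "(SUP n. min y (of_nat n)) = (SUP n. (of_nat n::ennreal))" using True by simp
    also have "\<dots> = top" by (rule ennreal_SUP_of_nat_eq_top)
    finally have eq: "(SUP n. min y (of_nat n)) = top" .
    show ?thesis unfolding eq by simp
  next
    case False
    then obtain t where t: "y = ennreal t" "0 \<le> t" by (cases y) auto
    obtain n :: nat where "t \<le> real n" using real_nat_ceiling_ge by blast
    then have "y \<le> of_nat n" using t by (simp add: ennreal_of_nat_eq_real_of_nat ennreal_leI)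
    then have "y \<le> min y (of_nat n)" by simp
    also have "\<dots> \<le> (SUP n. min y (of_nat n))" by (rule SUP_upper) simp
    finally show ?thesis .
  qed
qed

lemma top_of_nat_le: assumes "\<And>K::nat. of_nat K \<le> (x::ennreal)" shows "x = top"
proof -
  have "(SUP K. of_nat K) \<le> x" using assms by (intro SUP_least) auto
  then show ?thesis using ennreal_SUP_of_nat_eq_top by (simp add: top_unique)
qed

context MR
begin

lemma choose_a:
  fixes h :: "ennreal \<Rightarrow> ennreal"
  assumes anti: "\<And>x y. x \<le> y \<Longrightarrow> h y \<le> h x"
    and inf: "(\<integral>\<^sup>+ r. ennreal r ^ d * h (ennreal r) \<partial>M) = \<infinity>"
  shows "\<exists>a. aok a \<and> (\<integral>\<^sup>+ r. ennreal r ^ d * Fa a (h (ennreal r)) \<partial>M) = \<infinity>"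
proof -
  have hm[measurable]: "(\<lambda>r. h (ennreal r)) \<in> borel_measurable M"
    by (rule meas_borel[OF antitone_comp_ennreal[OF anti]])
  define J where "J n = (\<integral>\<^sup>+ r. ennreal r ^ d * min (h (ennreal r)) (of_nat n) \<partial>M)" for n :: nat
  have "(SUP n. J n) = (\<integral>\<^sup>+ r. (SUP n. ennreal r ^ d * min (h (ennreal r)) (of_nat n)) \<partial>M)"
    unfolding J_def
  proof (rule nn_integral_monotone_convergence_SUP[symmetric])
    show "incseq (\<lambda>n r. ennreal r ^ d * min (h (ennreal r)) (of_nat n))"
      by (intro monoI le_funI mult_left_mono min.mono) auto
  qed measurable
  also have "\<dots> = (\<integral>\<^sup>+ r. ennreal r ^ d * h (ennreal r) \<partial>M)"
    by (simp add: SUP_mult_left_ennreal[symmetric] SUP_min_nat)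
  finally have SJ: "(SUP n. J n) = \<infinity>" using inf by simp
  have "\<forall>K. \<exists>n. of_nat (Suc K * K) < J n"
  proof
    fix K
    have "(of_nat (Suc K * K) :: ennreal) < top" by (rule of_nat_less_top)
    then have "(of_nat (Suc K * K) :: ennreal) < (SUP n. J n)" by (subst SJ) simp
    then show "\<exists>n. of_nat (Suc K * K) < J n" by (simp add: less_SUP_iff)
  qed
  then obtain nf where nf: "\<And>K. of_nat (Suc K * K) < J (nf K)" by metis
  define a where "a K = real (Suc K) + (\<Sum>j\<le>K. real (nf j))" for K
  have aok: "aok a" unfolding aok_def
  proof
    show "mono a"
    proof (rule monoI)
      fix K L :: nat assume "K \<le> L"
      then have "(\<Sum>j\<le>K. real (nf j)) \<le> (\<Sum>j\<le>L. real (nf j))"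
        by (intro sum_mono2) auto
      then show "a K \<le> a L" using \<open>K \<le> L\<close> by (simp add: a_def)
    qed
    show "\<forall>k. real (Suc k) \<le> a k" by (simp add: a_def sum_nonneg)
  qed
  have aK: "real (nf K) \<le> a K" for K
  proof -
    have "real (nf K) \<le> (\<Sum>j\<le>K. real (nf j))" by (rule member_le_sum) auto
    then show ?thesis by (simp add: a_def)
  qed
  have big: "of_nat K \<le> (\<integral>\<^sup>+ r. ennreal r ^ d * Fa a (h (ennreal r)) \<partial>M)" for K
  proof -
    define e where "e = ennreal (1 / real (Suc K))"
    have e1: "e \<le> 1" unfolding e_def using ennreal_leI[of "1 / real (Suc K)" 1] by simp
    have "(of_nat K :: ennreal) = e * of_nat (Suc K * K)"
    proof -
      have "e * of_nat (Suc K * K) = ennreal (1 / real (Suc K)) * ennreal (real (Suc K * K))"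
        unfolding e_def by (simp only: ennreal_of_nat_eq_real_of_nat)
      also have "\<dots> = ennreal (1 / real (Suc K) * real (Suc K * K))"
        by (rule ennreal_mult[symmetric]) auto
      also have "1 / real (Suc K) * real (Suc K * K) = real K"
      proof -
        have "real (Suc K * K) = real (Suc K) * real K" by (simp only: of_nat_mult)
        then show ?thesis by simp
      qed
      finally show ?thesis by (simp add: ennreal_of_nat_eq_real_of_nat)
    qed
    also have "\<dots> \<le> e * J (nf K)" using nf[of K] by (intro mult_left_mono) auto
    also have "\<dots> = (\<integral>\<^sup>+ r. e * (ennreal r ^ d * min (h (ennreal r)) (of_nat (nf K))) \<partial>M)"
      unfolding J_def by (rule nn_integral_cmult[symmetric]) measurable
    also have "\<dots> \<le> (\<integral>\<^sup>+ r. ennreal r ^ d * Fa a (h (ennreal r)) \<partial>M)"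
    proof (rule nn_integral_mono)
      fix r
      let ?y = "h (ennreal r)"
      have "e * min ?y (of_nat (nf K)) \<le> min (?y * ennreal (1 / real (Suc K))) (ennreal (a K))"
      proof (rule min.boundedI)
        have "e * min ?y (of_nat (nf K)) \<le> e * ?y" by (rule mult_left_mono) auto
        also have "e * ?y = ?y * ennreal (1 / real (Suc K))" unfolding e_def by (rule mult.commute)
        finally show "e * min ?y (of_nat (nf K)) \<le> ?y * ennreal (1 / real (Suc K))" .
        have "e * min ?y (of_nat (nf K)) \<le> 1 * of_nat (nf K)"
          using e1 by (intro mult_mono) auto
        also have "\<dots> \<le> ennreal (a K)"
        proof -
          have "(of_nat (nf K) :: ennreal) = ennreal (real (nf K))" by (rule ennreal_of_nat_eq_real_of_nat)
          then show ?thesis using ennreal_leI[OF aK[of K]] by simp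
        qed
        finally show "e * min ?y (of_nat (nf K)) \<le> ennreal (a K)" .
      qed
      also have "\<dots> \<le> Fa a ?y" by (rule Fa_lower[OF aok])
      finally have "e * min ?y (of_nat (nf K)) \<le> Fa a ?y" .
      then have "ennreal r ^ d * (e * min ?y (of_nat (nf K))) \<le> ennreal r ^ d * Fa a ?y"
        by (rule mult_left_mono) simp
      then show "e * (ennreal r ^ d * min ?y (of_nat (nf K))) \<le> ennreal r ^ d * Fa a ?y"
        by (metis mult.left_commute)
    qed
    finally show ?thesis .
  qed
  show ?thesis using top_of_nat_le[OF big] aok by auto
qed

end



definition gF :: "nat \<Rightarrow> (nat \<Rightarrow> real) \<Rightarrow> (ennreal \<Rightarrow> ennreal) \<Rightarrow> ennreal \<Rightarrow> ennreal" where
  "gF d a h r = (if r = 0 then 0 else if r = top then top else r ^ d * Fa a (h r))"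

lemma pow_mult_div: fixes r :: ennreal assumes "0 < r" "r < top" shows "r ^ d * X / r ^ d = X"
  using ennreal_mult_divide_eq[of "r ^ d" X] pow_nz[OF assms] by (simp add: mult.commute)

lemma gF_div: fixes r :: ennreal assumes "0 < r" "r < top" shows "gF d a h r / r ^ d = Fa a (h r)"
  using assms pow_mult_div[OF assms] by (auto simp: gF_def)

lemma gF_dnorm:
  assumes "0 < r" "r < top" and anti: "\<And>x y. x \<le> y \<Longrightarrow> h y \<le> h x"
  shows "dnorm d (gF d a h) r = r ^ d * Fa a (h r)"
proof -
  have "dnorm d (gF d a h) r = gF d a h r"
  proof (rule dnorm_eq_self[OF assms(1,2)])
    fix \<rho> :: ennreal assume \<rho>: "0 < \<rho>" "\<rho> \<le> r"
    then have \<rho>t: "\<rho> < top" using assms by auto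
    show "gF d a h r / r ^ d \<le> gF d a h \<rho> / \<rho> ^ d"
      using gF_div[OF assms(1,2)] gF_div[OF \<rho>(1) \<rho>t] \<rho> anti by (simp add: Fa_mono)
  qed
  moreover have "r \<noteq> 0" "r \<noteq> top" using assms by auto
  ultimately show ?thesis by (simp add: gF_def)
qed

lemma pow_small:
  assumes "1 \<le> d" "c < top" "0 < t"
  shows "eventually (\<lambda>r::ennreal. r ^ d * c < ennreal t) (at_right 0)"
proof -
  obtain c' where c: "c = ennreal c'" "0 \<le> c'" using assms by (cases c) auto
  define b where "b = min 1 (t / (c' + 1))"
  have b: "0 < b" "b \<le> 1" "b * c' < t"
  proof -
    show "0 < b" "b \<le> 1" using assms c by (auto simp: b_def)
    have "b * c' \<le> t / (c' + 1) * c'" using c by (intro mult_right_mono) (auto simp: b_def)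
    also have "\<dots> < t" using assms c by (simp add: field_simps)
    finally show "b * c' < t" .
  qed
  show ?thesis unfolding ev_at_right0
  proof (intro exI[of _ "ennreal b"] conjI allI impI)
    show "0 < ennreal b" using b by simp
    fix r :: ennreal assume r: "0 < r" "r < ennreal b"
    then obtain r' where r': "r = ennreal r'" "0 \<le> r'" by (cases r) auto
    have rb: "r' < b" using r r' by (simp add: ennreal_less_iff)
    have "r' ^ d \<le> r' ^ 1" using r' rb b assms by (intro power_decreasing) auto
    then have "r' ^ d * c' \<le> r' * c'" using c by (intro mult_right_mono) auto
    also have "\<dots> \<le> b * c'" using rb c by (intro mult_right_mono) auto
    finally have "r' ^ d * c' < t" using b by simp
    then show "r ^ d * c < ennreal t" using r' c
      by (simp add: ennreal_power ennreal_mult[symmetric] ennreal_less_iff)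
  qed
qed

context MR
begin

lemma gF_gauge_n:
  assumes aok: "aok a" and anti: "\<And>x y. x \<le> y \<Longrightarrow> h y \<le> h x"
    and htop: "(h \<longlongrightarrow> top) (at_right 0)"
    and \<epsilon>: "\<epsilon> > 0" and monoh: "\<And>r s. 0 < r \<Longrightarrow> r \<le> s \<Longrightarrow> s \<le> \<epsilon> \<Longrightarrow> r ^ d * h r \<le> s ^ d * h s"
    and bnd: "eventually (\<lambda>r. r ^ d * h r \<le> 1) (at_right 0)"
    and int: "(\<integral>\<^sup>+ r. ennreal r ^ d * Fa a (h (ennreal r)) \<partial>M) = \<infinity>"
  shows "gF d a h \<in> gauge_n d M"
proof -
  define e where "e = min \<epsilon> 1"
  have e: "e > 0" "e < top" "e \<le> \<epsilon>" using \<epsilon>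
    by (auto simp: e_def min_def dest: order.strict_trans1[OF _ ennreal_one_less_top])
  have mono: "mono_on {0..e} (gF d a h)"
  proof (rule mono_onI)
    fix r s assume rs: "r \<in> {0..e}" "s \<in> {0..e}" "r \<le> s"
    show "gF d a h r \<le> gF d a h s"
    proof (cases "r = 0")
      case True then show ?thesis by (simp add: gF_def)
    next
      case False
      then have r: "0 < r" by (simp add: zero_less_iff_neq_zero)
      have s: "0 < s" "s < top" using rs r e by auto
      have "r ^ d * Fa a (h r) \<le> s ^ d * Fa a (h s)"
      proof (rule Fa_scale)
        show "r ^ d \<le> s ^ d" using rs by (intro power_mono) auto
        show "s ^ d < top" using s by (simp add: power_less_top_ennreal)
        show "r ^ d * h r \<le> s ^ d * h s" using rs r e by (intro monoh) auto
      qed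
      moreover have "r \<noteq> 0" "r \<noteq> top" "s \<noteq> 0" "s \<noteq> top" using r s rs by auto
      ultimately show ?thesis by (simp add: gF_def)
    qed
  qed
  have lim: "(gF d a h \<longlongrightarrow> 0) (at_right 0)"
  proof (rule tendsto_zero_ennreal)
    fix t :: real assume t: "0 < t"
    obtain K :: nat where K: "2 / t < real K" using reals_Archimedean2 by blast
    have Kt: "1 / real (Suc K) < t / 2"
    proof -
      have "2 / t < real (Suc K)" using K by simp
      then have "2 < real (Suc K) * t" using t by (simp add: field_simps)
      then show ?thesis using t by (simp add: field_simps)
    qed
    have aKt: "ennreal (a K) < top" by simp
    have ev1: "eventually (\<lambda>r. r ^ d * ennreal (a K) < ennreal (t / 2)) (at_right 0)"
      using pow_small[OF d_pos aKt] t by simp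
    have ev2: "eventually (\<lambda>r::ennreal. 0 < r \<and> r < 1) (at_right 0)"
      unfolding ev_at_right0 by (intro exI[of _ 1]) auto
    from ev1 ev2 bnd show "eventually (\<lambda>r. gF d a h r < ennreal t) (at_right 0)"
    proof eventually_elim
      case (elim r)
      have rt: "r < top" using elim order.strict_trans[OF _ ennreal_one_less_top] by blast
      then have r: "0 < r" "r < top" "r \<noteq> 0" "r \<noteq> top" using elim by auto
      let ?e = "ennreal (1 / real (Suc K))"
      have "gF d a h r = r ^ d * Fa a (h r)" using r by (simp add: gF_def)
      also have "\<dots> \<le> r ^ d * (h r * ?e + ennreal (a K))" by (intro mult_left_mono Fa_upper) auto
      also have "\<dots> = (r ^ d * h r) * ?e + r ^ d * ennreal (a K)"
        by (simp add: distrib_left mult.assoc)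
      also have "\<dots> \<le> 1 * ?e + r ^ d * ennreal (a K)"
        using elim by (intro add_right_mono mult_right_mono) auto
      also have "\<dots> < ennreal t"
      proof -
        have lt: "r ^ d * ennreal (a K) < top"
          by (rule order.strict_trans[OF elim(1) ennreal_less_top])
        obtain x where x: "r ^ d * ennreal (a K) = ennreal x" "0 \<le> x"
        proof (rule ennreal_cases[of "r ^ d * ennreal (a K)"])
          fix y assume "r ^ d * ennreal (a K) = ennreal y" "0 \<le> y" then show ?thesis by (rule that)
        next
          assume "r ^ d * ennreal (a K) = top" with lt show ?thesis by simp
        qed
        have "ennreal x < ennreal (t / 2)" using elim(1) unfolding x(1) .
        then have "x < t / 2" using ennreal_less_iff[OF x(2)] by blast
        then have xt: "1 / real (Suc K) + x < t" using Kt by simp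
        have "1 * ?e + r ^ d * ennreal (a K) = ennreal (1 / real (Suc K) + x)"
          unfolding x(1) using x(2) by (simp add: ennreal_plus)
        also have "\<dots> < ennreal t" using xt x(2) by (subst ennreal_less_iff) auto
        finally show ?thesis .
      qed
      finally show ?case .
    qed
  qed
  have gauge: "gF d a h \<in> gauge"
    unfolding gauge_def using mono lim e by (auto simp: gF_def)
  have "ell d (gF d a h) = Liminf (at_right 0) (\<lambda>r. Fa a (h r))"
    unfolding ell_def
  proof (rule Liminf_eq)
    show "\<forall>\<^sub>F x in at_right 0. gF d a h x / x ^ d = Fa a (h x)"
      unfolding ev_at_right0
      by (intro exI[of _ 1]) (auto intro!: gF_div dest: order.strict_trans[OF _ ennreal_one_less_top])
  qed
  also have "\<dots> = top"
    by (rule lim_imp_Liminf[OF at_right_0_ennreal_nbot Fa_top[OF aok htop]])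
  finally have ell: "ell d (gF d a h) = top" .
  have "(\<integral>\<^sup>+ r. dnorm d (gF d a h) (ennreal r) \<partial>M) = (\<integral>\<^sup>+ r. ennreal r ^ d * Fa a (h (ennreal r)) \<partial>M)"
    by (rule nn_integral_cong) (auto simp: space_M intro!: gF_dnorm anti)
  then show ?thesis using int gauge ell by (simp add: gauge_n_def gauge_inf_def)
qed

end



lemma inv_anti: fixes a b :: ennreal assumes "a \<le> b" shows "inverse b \<le> inverse a"
proof (cases "a = 0 \<or> b = top")
  case True then show ?thesis by auto
next
  case False
  then have bt: "b < top" by (simp add: top.not_eq_extremum)
  then have at: "a < top" using assms by auto
  obtain a' where a': "a = ennreal a'" "0 \<le> a'" using at by (cases a) auto
  obtain b' where b': "b = ennreal b'" "0 \<le> b'" using bt by (cases b) auto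
  have "0 < a'" using a' False by auto
  moreover have "a' \<le> b'" using assms a' b' by (simp add: ennreal_le_iff)
  ultimately show ?thesis using a' b' by (simp add: inverse_ennreal le_imp_inverse_le ennreal_leI)
qed

lemma gprecI2:
  assumes "(\<epsilon>::ennreal) > 0" "\<And>r s. 0 < r \<Longrightarrow> r \<le> s \<Longrightarrow> s < \<epsilon> \<Longrightarrow> H s / G s \<le> H r / G r"
    "((\<lambda>r. H r / G r) \<longlongrightarrow> top) (at_right 0)"
  shows "gprec H G"
  unfolding gprec_def using assms by blast

lemma ratio_cancel: fixes c x y :: ennreal assumes "c \<noteq> 0" "c \<noteq> top"
  shows "(c * x) / (c * y) = x / y"
  using assms divide_mult_eq[of c x y] by (simp add: mult.commute)

lemma pow_inv_one: fixes r :: ennreal assumes "0 < r" "r < top" shows "r ^ d * inverse (r ^ d) = 1"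
  using ennreal_divide_self[of "r ^ d"] pow_nz[OF assms] by (simp add: divide_ennreal_def top.not_eq_extremum)

context MR
begin

lemma nonempty: "gauge_n d M \<noteq> {}"
proof -
  define h where "h r = inverse (r ^ d)" for r :: ennreal
  have anti: "h y \<le> h x" if "x \<le> y" for x y
    unfolding h_def by (intro inv_anti power_mono that) simp
  have htop: "(h \<longlongrightarrow> top) (at_right 0)"
    unfolding tendsto_top_iff_ennreal
  proof (intro allI impI)
    fix l :: real assume l: "0 \<le> l"
    have "eventually (\<lambda>r::ennreal. r ^ d * 1 < ennreal (1 / (l + 1))) (at_right 0)"
      using l by (intro pow_small d_pos) auto
    then show "eventually (\<lambda>r. ennreal l < h r) (at_right 0)"
    proof eventually_elim
      case (elim r)
      show ?case
      proof (cases "r ^ d = 0")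
        case True show ?thesis unfolding h_def True by simp
      next
        case False
        obtain u where u: "r ^ d = ennreal u" "0 \<le> u"
          using elim by (cases "r ^ d") auto
        have u0: "0 < u" using u False by auto
        have ul: "u < 1 / (l + 1)" using elim u by (simp add: ennreal_less_iff)
        then have "l + 1 < 1 / u" using u0 l by (simp add: field_simps)
        then have "l < inverse u" by (simp add: field_simps)
        then show ?thesis using u u0 l by (simp add: h_def inverse_ennreal ennreal_less_iff)
      qed
    qed
  qed
  have one: "r ^ d * h r = 1" if "0 < r" "r < top" for r
    unfolding h_def using pow_inv_one[OF that] .
  have int: "(\<integral>\<^sup>+ r. ennreal r ^ d * h (ennreal r) \<partial>M) = \<infinity>"
  proof -
    have "(\<integral>\<^sup>+ r. ennreal r ^ d * h (ennreal r) \<partial>M) = (\<integral>\<^sup>+ r. 1 \<partial>M)"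
      by (rule nn_integral_cong) (auto simp: space_M intro!: one)
    also have "\<dots> = emeasure M (space M)" by simp
    also have "\<dots> = \<infinity>" using meas_inf space_M by simp
    finally show ?thesis .
  qed
  obtain a where a: "aok a" "(\<integral>\<^sup>+ r. ennreal r ^ d * Fa a (h (ennreal r)) \<partial>M) = \<infinity>"
    using choose_a[OF anti int] by blast
  have "gF d a h \<in> gauge_n d M"
  proof (rule gF_gauge_n[OF a(1) anti htop _ _ _ a(2)])
    show "(1::ennreal) > 0" by simp
    fix r s :: ennreal assume "0 < r" "r \<le> s" "s \<le> 1"
    assume rs: "0 < r" "r \<le> s" "s \<le> 1"
    have st: "s < top" using rs(3) ennreal_one_less_top by (rule order.strict_trans1)
    have "r < top" using rs(2) st by (rule order.strict_trans1)
    then show "r ^ d * h r \<le> s ^ d * h s"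
      using one[of r] one[of s] rs st by simp
  next
    show "\<forall>\<^sub>F r in at_right 0. r ^ d * h r \<le> 1"
      unfolding ev_at_right0
    proof (intro exI[of _ 1] conjI allI impI)
      fix y :: ennreal assume "0 < y" "y < 1"
      moreover have "y < top" using \<open>y < 1\<close> ennreal_one_less_top by (rule order.strict_trans)
      ultimately show "y ^ d * h y \<le> 1" using one[of y] by simp
    qed simp
  qed
  then show ?thesis by blast
qed

end



lemma lt1_top: fixes x e :: ennreal assumes "x < e" "e \<le> 1" shows "x < top"
proof -
  have "x < 1" using assms by (rule order.strict_trans2)
  then show ?thesis using ennreal_one_less_top by (rule order.strict_trans)
qed

lemma hinf_fin: assumes "0 < r" "r < top" "g r < top" shows "hinf d g r < top"
proof -
  have "g r / r ^ d \<noteq> top" using assms pow_nz[OF assms(1,2), of d]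
    by (simp add: ennreal_divide_eq_top_iff)
  then have lt: "g r / r ^ d < top" by (simp add: less_top)
  have "hinf d g r \<le> g r / r ^ d" using assms by (intro hinf_lower) auto
  then show ?thesis using lt by (rule order.strict_trans1)
qed

lemma div_ratio_le:
  fixes a b Fa Fb :: ennreal
  assumes "Fa \<noteq> 0" "Fa \<noteq> top" "Fb \<noteq> 0" "Fb \<noteq> top" "b * Fa \<le> a * Fb"
  shows "b / Fb \<le> a / Fa"
proof -
  have "b \<le> a * Fb / Fa" using assms by (simp add: le_ediv_iff)
  also have "a * Fb / Fa = a / Fa * Fb" by (simp add: ennreal_divide_times ennreal_times_divide)
  finally show ?thesis using assms by (simp add: ediv_le_iff)
qed

lemma g_small: assumes "g \<in> gauge" shows "\<exists>b>0. \<forall>r. 0 < r \<longrightarrow> r < b \<longrightarrow> g r < 1"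
proof -
  have "(g \<longlongrightarrow> 0) (at_right 0)" using assms by (simp add: gauge_def)
  then have "eventually (\<lambda>r. g r < 1) (at_right 0)" by (rule order_tendstoD) simp
  then show ?thesis unfolding ev_at_right0 .
qed

context MR
begin

lemma right_step: assumes gn: "g \<in> gauge_n d M"
  shows "\<exists>g'\<in>gauge_n d M. gprec (dnorm d g) (dnorm d g')"
proof -
  have g: "g \<in> gauge" and ellg: "ell d g = top"
    and intg: "(\<integral>\<^sup>+ r. dnorm d g (ennreal r) \<partial>M) = \<infinity>"
    using gn by (auto simp: gauge_n_def gauge_inf_def)
  define h where "h = hinf d g"
  have anti: "h y \<le> h x" if "x \<le> y" for x y unfolding h_def by (rule hinf_anti[OF that])
  have htop: "(h \<longlongrightarrow> top) (at_right 0)" unfolding h_def by (rule hinf_top[OF ellg])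
  obtain \<epsilon> where \<epsilon>: "\<epsilon> > 0" "mono_on {0..\<epsilon>} (dnorm d g)" and dlim: "(dnorm d g \<longlongrightarrow> 0) (at_right 0)"
    using dnorm_gauge[OF g, of d] unfolding gauge_def by auto
  define e where "e = min \<epsilon> 1"
  have e: "e > 0" "e < top" "e \<le> \<epsilon>" using \<epsilon>
    by (auto simp: e_def min_def dest: order.strict_trans1[OF _ ennreal_one_less_top])
  have monoh: "r ^ d * h r \<le> s ^ d * h s" if "0 < r" "r \<le> s" "s \<le> e" for r s
  proof -
    have st: "s < top" using that e by auto
    have "r ^ d * h r = dnorm d g r" unfolding h_def using that st by (simp add: dnorm_eq)
    also have "\<dots> \<le> dnorm d g s" using that e by (intro mono_onD[OF \<epsilon>(2)]) auto
    also have "\<dots> = s ^ d * h s" unfolding h_def using that st by (simp add: dnorm_eq)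
    finally show ?thesis .
  qed
  have bnd: "eventually (\<lambda>r. r ^ d * h r \<le> 1) (at_right 0)"
  proof -
    have "eventually (\<lambda>r. dnorm d g r < 1) (at_right 0)" using dlim by (rule order_tendstoD) simp
    moreover have "eventually (\<lambda>r::ennreal. 0 < r \<and> r < 1) (at_right 0)"
      unfolding ev_at_right0 by (intro exI[of _ 1]) auto
    ultimately show ?thesis
    proof eventually_elim
      case (elim r)
      have "r < top" using order.strict_trans[OF _ ennreal_one_less_top] elim by blast
      then have "r ^ d * h r = dnorm d g r" unfolding h_def using elim by (simp add: dnorm_eq)
      then show ?case using elim by simp
    qed
  qed
  have int: "(\<integral>\<^sup>+ r. ennreal r ^ d * h (ennreal r) \<partial>M) = \<infinity>"
  proof -
    have "(\<integral>\<^sup>+ r. ennreal r ^ d * h (ennreal r) \<partial>M) = (\<integral>\<^sup>+ r. dnorm d g (ennreal r) \<partial>M)"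
      by (rule nn_integral_cong) (auto simp: space_M h_def dnorm_eq)
    then show ?thesis using intg by simp
  qed
  obtain a where a: "aok a" "(\<integral>\<^sup>+ r. ennreal r ^ d * Fa a (h (ennreal r)) \<partial>M) = \<infinity>"
    using choose_a[OF anti int] by blast
  have gn': "gF d a h \<in> gauge_n d M"
    by (rule gF_gauge_n[OF a(1) anti htop e(1) monoh bnd a(2)])
  obtain b where b: "b > 0" "\<And>r. 0 < r \<Longrightarrow> r < b \<Longrightarrow> g r < 1" using g_small[OF g] by blast
  define e' where "e' = min b 1"
  have e': "e' > 0" "e' \<le> 1" "e' \<le> b" using b by (auto simp: e'_def)
  have hfin: "h r < top" if "0 < r" "r < e'" for r
  proof -
    have rt: "r < top" using that(2) e'(2) by (rule lt1_top)
    have "g r < 1" using b that e' by auto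
    then have "g r < top" using ennreal_one_less_top by (rule order.strict_trans)
    then show ?thesis unfolding h_def using hinf_fin that rt by blast
  qed
  have req: "dnorm d g r / dnorm d (gF d a h) r = h r / Fa a (h r)" if "0 < r" "r < top" for r
  proof -
    have "dnorm d g r = r ^ d * h r" unfolding h_def using that by (rule dnorm_eq)
    moreover have "dnorm d (gF d a h) r = r ^ d * Fa a (h r)" using that anti by (rule gF_dnorm)
    ultimately have "dnorm d g r / dnorm d (gF d a h) r = (r ^ d * h r) / (r ^ d * Fa a (h r))"
      by simp
    also have "\<dots> = h r / Fa a (h r)" using pow_nz[OF that] by (rule ratio_cancel)
    finally show ?thesis .
  qed
  have "gprec (dnorm d g) (dnorm d (gF d a h))"
  proof (rule gprecI2[OF e'(1)])
    fix r s :: ennreal assume rs: "0 < r" "r \<le> s" "s < e'"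
    have st: "s < top" "r < top" using lt1_top[OF rs(3) e'(2)] rs(2) by auto
    have hr: "h r < top" using rs by (intro hfin) auto
    have hs: "h s \<le> h r" using rs(2) by (rule anti)
    then have hst: "h s < top" using hr by auto
    have "h s / Fa a (h s) \<le> h r / Fa a (h r)"
    proof (rule div_ratio_le)
      show "Fa a (h r) \<noteq> 0" "Fa a (h s) \<noteq> 0" using Fa_ge1[OF a(1)] by (metis not_one_le_zero)+
      show "Fa a (h r) \<noteq> top" "Fa a (h s) \<noteq> top" using Fa_fin[OF hr, of a] Fa_fin[OF hst, of a] by auto
      show "h s * Fa a (h r) \<le> h r * Fa a (h s)" by (rule Fa_ratio[OF hs hr])
    qed
    then show "dnorm d g s / dnorm d (gF d a h) s \<le> dnorm d g r / dnorm d (gF d a h) r"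
      using req[of s] req[of r] rs st by simp
  next
    have ev: "eventually (\<lambda>r. h r / Fa a (h r) = dnorm d g r / dnorm d (gF d a h) r) (at_right 0)"
      unfolding ev_at_right0
      by (intro exI[of _ 1]) (auto intro!: req[symmetric] dest: order.strict_trans[OF _ ennreal_one_less_top])
    have evf: "eventually (\<lambda>r. h r < top) (at_right 0)"
      unfolding ev_at_right0 using e' hfin by blast
    show "((\<lambda>r. dnorm d g r / dnorm d (gF d a h) r) \<longlongrightarrow> top) (at_right 0)"
      using tendsto_cong[OF ev] Fa_ratio_top[OF a(1) htop evf] by simp
  qed
  then show ?thesis using gn' by blast
qed

end



definition Phi :: "(nat \<Rightarrow> real) \<Rightarrow> ennreal \<Rightarrow> ennreal" where
  "Phi a x = (\<Sum>k. min x (ennreal (a k)))"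

lemma Phi_0: "Phi a 0 = 0" by (simp add: Phi_def)

lemma Phi_mono: assumes "x \<le> y" shows "Phi a x \<le> Phi a y"
  unfolding Phi_def using assms by (intro suminf_le summableI min.mono) auto

lemma Phi_ratio: fixes x z :: ennreal assumes "x \<le> z" shows "Phi a z * x \<le> Phi a x * z"
proof -
  have "Phi a z * x = (\<Sum>k. min z (ennreal (a k)) * x)" unfolding Phi_def by (rule ennreal_suminf_multc[symmetric])
  also have "\<dots> \<le> (\<Sum>k. min x (ennreal (a k)) * z)"
  proof (intro suminf_le summableI)
    fix k
    let ?a = "ennreal (a k)"
    show "min z ?a * x \<le> min x ?a * z"
    proof (cases "?a \<le> x")
      case True
      then have "min z ?a = ?a" "min x ?a = ?a" using assms by auto
      then show ?thesis using assms by (simp add: mult_left_mono)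
    next
      case False
      then have mx: "min x ?a = x" by simp
      show ?thesis
      proof (cases "?a \<le> z")
        case True
        then have "min z ?a * x \<le> z * x" by (intro mult_right_mono) auto
        then show ?thesis using mx by (simp add: mult.commute)
      next
        case False
        then have "min z ?a = z" by simp
        then show ?thesis using mx by (simp add: mult.commute)
      qed
    qed
  qed
  also have "\<dots> = Phi a x * z" unfolding Phi_def by (rule ennreal_suminf_multc)
  finally show ?thesis .
qed

lemma Phi_lower: assumes "\<And>k. k < N \<Longrightarrow> x \<le> ennreal (a k)" shows "of_nat N * x \<le> Phi a x"
proof -
  have "of_nat N * x = (\<Sum>k<N. min x (ennreal (a k)))" using assms by simp
  also have "\<dots> \<le> Phi a x" unfolding Phi_def by (intro sum_le_suminf summableI) auto
  finally show ?thesis .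
qed

lemma Phi_lower2: assumes "\<And>k. 0 < a k"
  shows "\<exists>\<delta>>0. \<forall>x\<le>\<delta>. of_nat N * x \<le> Phi a x"
proof -
  define m where "m = Min (insert 1 (a ` {..<N}))"
  have m: "0 < m" using assms by (simp add: m_def)
  have mk: "m \<le> a k" if "k < N" for k using that by (simp add: m_def)
  show ?thesis
  proof (intro exI[of _ "ennreal m"] conjI allI impI)
    show "0 < ennreal m" using m by simp
    fix x assume x: "x \<le> ennreal m"
    show "of_nat N * x \<le> Phi a x"
    proof (rule Phi_lower)
      fix k assume "k < N"
      then show "x \<le> ennreal (a k)" using x mk[of k] by (meson ennreal_leI order_trans)
    qed
  qed
qed

lemma small_zero: fixes x :: ennreal assumes "\<And>i. x \<le> ennreal (1 / real (Suc i))" shows "x = 0"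
proof (rule ccontr)
  assume "x \<noteq> 0"
  have "x \<le> 1" using assms[of 0] by simp
  then have "x < top" using ennreal_one_less_top by (rule order.strict_trans1)
  then obtain t where t: "x = ennreal t" "0 \<le> t" by (cases x) auto
  then have "0 < t" using \<open>x \<noteq> 0\<close> by auto
  then obtain n :: nat where n: "0 < n" "inverse (real n) < t" using ex_inverse_of_nat_less by blast
  have "1 / real (Suc n) \<le> inverse (real n)" using n by (simp add: field_simps)
  then have "1 / real (Suc n) < t" using n by simp
  moreover have "t \<le> 1 / real (Suc n)" using assms[of n] t by (simp add: ennreal_le_iff)
  ultimately show False by simp
qed

lemma Phi_small: assumes pos: "\<And>k. 0 \<le> a k" and le: "\<And>k. a k \<le> (1/2) ^ k" and u: "0 < u"
  shows "\<exists>\<delta>>0. Phi a \<delta> < u"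
proof -
  define f where "f i k = min (ennreal (1 / real (Suc i))) (ennreal (a k))" for i k
  have gs: "(\<lambda>k. (1/2::real) ^ k) sums 2" using geometric_sums[of "1/2::real"] by simp
  have sum2: "(\<Sum>k. ennreal ((1/2) ^ k)) = ennreal 2"
    by (rule suminf_ennreal_eq[OF _ gs]) simp
  have f0: "integral\<^sup>N (count_space UNIV) (f 0) < \<infinity>"
  proof -
    have "integral\<^sup>N (count_space UNIV) (f 0) = (\<Sum>k. f 0 k)" by (rule nn_integral_count_space_nat)
    also have "\<dots> \<le> (\<Sum>k. ennreal ((1/2) ^ k))"
    proof (intro suminf_le summableI)
      fix k
      have "f 0 k \<le> ennreal (a k)" unfolding f_def by (rule min.cobounded2)
      also have "\<dots> \<le> ennreal ((1/2) ^ k)" using le by (rule ennreal_leI)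
      finally show "f 0 k \<le> ennreal ((1/2) ^ k)" .
    qed
    also have "\<dots> < \<infinity>" using sum2 by simp
    finally show ?thesis .
  qed
  have "(\<integral>\<^sup>+ k. (INF i. f i k) \<partial>count_space UNIV) = (INF i. integral\<^sup>N (count_space UNIV) (f i))"
  proof (rule nn_integral_monotone_convergence_INF_AE'[where f=f and M="count_space UNIV"])
    show "AE x in count_space UNIV. f (Suc i) x \<le> f i x" for i
    proof -
      have "1 / real (Suc (Suc i)) \<le> 1 / real (Suc i)" by (intro divide_left_mono) auto
      then show ?thesis unfolding f_def by (intro AE_I2 min.mono ennreal_leI order_refl)
    qed
    show "integral\<^sup>N (count_space UNIV) (f 0) < \<infinity>" by (rule f0)
  qed simp
  moreover have "(INF i. f i k) = 0" for k
  proof (rule small_zero)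
    fix i show "(INF i. f i k) \<le> ennreal (1 / real (Suc i))"
      unfolding f_def by (rule INF_lower2[of i, OF UNIV_I min.cobounded1])
  qed
  ultimately have "(INF i. integral\<^sup>N (count_space UNIV) (f i)) = 0" by simp
  then have "(INF i. integral\<^sup>N (count_space UNIV) (f i)) < u" using u by simp
  then have "\<exists>i\<in>UNIV. integral\<^sup>N (count_space UNIV) (f i) < u" by (simp only: INF_less_iff)
  then obtain i where i: "integral\<^sup>N (count_space UNIV) (f i) < u" by blast
  have "Phi a (ennreal (1 / real (Suc i))) = integral\<^sup>N (count_space UNIV) (f i)"
    by (simp only: nn_integral_count_space_nat Phi_def f_def)
  then have "Phi a (ennreal (1 / real (Suc i))) < u" using i by simp
  moreover have "0 < ennreal (1 / real (Suc i))" by simp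
  ultimately show ?thesis by blast
qed



context MR
begin

lemma choose_phi_a:
  assumes phim[measurable]: "\<phi> \<in> borel_measurable M" and fin: "(\<integral>\<^sup>+ r. \<phi> r \<partial>M) < \<infinity>"
  shows "\<exists>a. (\<forall>k. 0 < a k) \<and> (\<forall>k. a k \<le> (1/2) ^ k) \<and>
             (\<forall>k. (\<integral>\<^sup>+ r. min (\<phi> r) (ennreal (a k)) \<partial>M) \<le> ennreal ((1/2) ^ k))"
proof -
  define f where "f i r = min (\<phi> r) (ennreal (1 / real (Suc i)))" for i r
  have fm[measurable]: "f i \<in> borel_measurable M" for i unfolding f_def by measurable
  have f0: "integral\<^sup>N M (f 0) < \<infinity>"
  proof -
    have "integral\<^sup>N M (f 0) \<le> (\<integral>\<^sup>+ r. \<phi> r \<partial>M)"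
      unfolding f_def by (rule nn_integral_mono) (rule min.cobounded1)
    then show ?thesis using fin by (rule order.strict_trans1)
  qed
  have "(\<integral>\<^sup>+ r. (INF i. f i r) \<partial>M) = (INF i. integral\<^sup>N M (f i))"
  proof (rule nn_integral_monotone_convergence_INF_AE'[where f=f and M=M])
    show "AE x in M. f (Suc i) x \<le> f i x" for i
    proof -
      have "1 / real (Suc (Suc i)) \<le> 1 / real (Suc i)" by (intro divide_left_mono) auto
      then show ?thesis unfolding f_def by (intro AE_I2 min.mono ennreal_leI order_refl)
    qed
    show "integral\<^sup>N M (f 0) < \<infinity>" by (rule f0)
  qed (rule fm)
  moreover have "(INF i. f i r) = 0" for r
  proof (rule small_zero)
    fix i show "(INF i. f i r) \<le> ennreal (1 / real (Suc i))"
      unfolding f_def by (rule INF_lower2[of i, OF UNIV_I min.cobounded2])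
  qed
  ultimately have I0: "(INF i. integral\<^sup>N M (f i)) = 0" by simp
  have "\<forall>k. \<exists>i. integral\<^sup>N M (f i) < ennreal ((1/2) ^ k)"
  proof
    fix k
    have "(INF i. integral\<^sup>N M (f i)) < ennreal ((1/2) ^ k)" using I0 by simp
    then have "\<exists>i\<in>UNIV. integral\<^sup>N M (f i) < ennreal ((1/2) ^ k)" by (simp only: INF_less_iff)
    then show "\<exists>i. integral\<^sup>N M (f i) < ennreal ((1/2) ^ k)" by blast
  qed
  then obtain nf where nf: "\<And>k. integral\<^sup>N M (f (nf k)) < ennreal ((1/2) ^ k)" by metis
  define a where "a k = min (1 / real (Suc (nf k))) ((1/2) ^ k)" for k
  show ?thesis
  proof (intro exI[of _ a] conjI allI)
    fix k
    show "0 < a k" by (simp add: a_def)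
    show "a k \<le> (1/2) ^ k" by (simp add: a_def)
    have "(\<integral>\<^sup>+ r. min (\<phi> r) (ennreal (a k)) \<partial>M) \<le> integral\<^sup>N M (f (nf k))"
      unfolding f_def by (intro nn_integral_mono min.mono order_refl ennreal_leI) (simp add: a_def)
    then show "(\<integral>\<^sup>+ r. min (\<phi> r) (ennreal (a k)) \<partial>M) \<le> ennreal ((1/2) ^ k)"
      using nf[of k] by simp
  qed
qed

end



lemma le1_top: fixes x e :: ennreal assumes "x \<le> e" "e \<le> 1" shows "x < top"
proof -
  have "x \<le> 1" using assms by (rule order.trans)
  then show ?thesis using ennreal_one_less_top by (rule order.strict_trans1)
qed

context MR
begin

lemma left_step: assumes gs: "g \<in> gauge_star d - gauge_n d M"
  shows "\<exists>g'\<in>gauge_star d - gauge_n d M. gprec (dnorm d g') (dnorm d g)"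
proof -
  have g: "g \<in> gauge" and ellpos: "0 < ell d g" and notn: "g \<notin> gauge_n d M"
    using gs by (auto simp: gauge_star_def)
  define \<phi> where "\<phi> r = dnorm d g (ennreal r)" for r :: real
  have \<phi>eq: "\<phi> = (\<lambda>r. ennreal r ^ d * hinf d g (ennreal r))"
  proof
    fix r :: real
    show "\<phi> r = ennreal r ^ d * hinf d g (ennreal r)"
    proof (cases "r \<le> 0")
      case True
      then have "ennreal r = 0" by (simp add: ennreal_eq_0_iff)
      then show ?thesis using d_pos by (simp add: \<phi>_def zero_power)
    next
      case False
      then show ?thesis unfolding \<phi>_def by (intro dnorm_eq) auto
    qed
  qed
  have hm[measurable]: "(\<lambda>r. hinf d g (ennreal r)) \<in> borel_measurable M"
    by (rule meas_borel[OF antitone_comp_ennreal]) (rule hinf_anti)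
  have phim[measurable]: "\<phi> \<in> borel_measurable M" unfolding \<phi>eq by measurable
  have fin: "(\<integral>\<^sup>+ r. \<phi> r \<partial>M) < \<infinity>"
  proof (cases "ell d g = top")
    case True
    then have "g \<in> gauge_inf d" using g by (simp add: gauge_inf_def)
    then have "(\<integral>\<^sup>+ r. \<phi> r \<partial>M) \<noteq> \<infinity>" using notn by (simp add: gauge_n_def \<phi>_def)
    then show ?thesis by (simp add: less_top)
  next
    case False
    have "(\<integral>\<^sup>+ r. \<phi> r \<partial>M) \<le> (\<integral>\<^sup>+ r. ennreal r ^ d * ell d g \<partial>M)"
    proof (rule nn_integral_mono)
      fix r assume "r \<in> space M"
      then have "0 < r" by (simp add: space_M)
      then have "hinf d g (ennreal r) \<le> ell d g" by (intro hinf_le_ell) simp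
      then show "\<phi> r \<le> ennreal r ^ d * ell d g" unfolding \<phi>eq by (intro mult_left_mono) auto
    qed
    also have "\<dots> = (\<integral>\<^sup>+ r. ennreal r ^ d \<partial>M) * ell d g" by (rule nn_integral_multc) measurable
    also have "\<dots> < \<infinity>" using int_pow False by (simp add: ennreal_mult_less_top less_top)
    finally show ?thesis .
  qed
  obtain a where apos: "\<And>k. 0 < a k" and ale: "\<And>k. a k \<le> (1/2) ^ k"
    and aint: "\<And>k. (\<integral>\<^sup>+ r. min (\<phi> r) (ennreal (a k)) \<partial>M) \<le> ennreal ((1/2) ^ k)"
    using choose_phi_a[OF phim fin] by blast
  have a0: "0 \<le> a k" for k using apos[of k] by simp
  define g' where "g' r = (if r = top then top else Phi a (dnorm d g r))" for r
  obtain \<epsilon> where \<epsilon>: "\<epsilon> > 0" "mono_on {0..\<epsilon>} (dnorm d g)" and dlim: "(dnorm d g \<longlongrightarrow> 0) (at_right 0)"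
    using dnorm_gauge[OF g, of d] unfolding gauge_def by auto
  define e where "e = min \<epsilon> 1"
  have e: "e > 0" "e \<le> 1" "e \<le> \<epsilon>" using \<epsilon> by (auto simp: e_def)
  have ev01: "eventually (\<lambda>r::ennreal. 0 < r \<and> r < 1) (at_right 0)"
    unfolding ev_at_right0 by (intro exI[of _ 1]) auto
  have g'eq: "g' r = Phi a (dnorm d g r)" if "r < top" for r
  proof -
    have "r \<noteq> top" using that by simp
    then show ?thesis by (simp add: g'_def)
  qed
  have mono: "mono_on {0..e} g'"
  proof (rule mono_onI)
    fix r s assume rs: "r \<in> {0..e}" "s \<in> {0..e}" "r \<le> s"
    have st: "s < top" "r < top" using rs e le1_top[of s e] le1_top[of r e] by auto
    have "dnorm d g r \<le> dnorm d g s" using rs e by (intro mono_onD[OF \<epsilon>(2)]) auto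
    then show "g' r \<le> g' s" using st by (simp add: g'eq Phi_mono)
  qed
  have lim: "(g' \<longlongrightarrow> 0) (at_right 0)"
  proof (rule order_tendstoI)
    fix u :: ennreal assume "0 < u"
    then obtain \<delta> where \<delta>: "\<delta> > 0" "Phi a \<delta> < u" using Phi_small[OF a0 ale] by blast
    have "eventually (\<lambda>r. dnorm d g r < \<delta>) (at_right 0)" using dlim \<delta>(1) by (rule order_tendstoD)
    with ev01 show "eventually (\<lambda>r. g' r < u) (at_right 0)"
    proof eventually_elim
      case (elim r)
      then have "r < top" using order.strict_trans[OF _ ennreal_one_less_top] by blast
      then have "g' r = Phi a (dnorm d g r)" by (rule g'eq)
      also have "\<dots> \<le> Phi a \<delta>" using elim by (intro Phi_mono) auto
      finally show ?case using \<delta>(2) by simp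
    qed
  qed simp
  have g'gauge: "g' \<in> gauge"
    unfolding gauge_def using mono lim e by (auto simp: g'_def Phi_0)
  have "\<exists>\<delta>>0. \<forall>x\<le>\<delta>. of_nat 1 * x \<le> Phi a x" by (rule Phi_lower2[OF apos])
  then obtain \<delta>1 where \<delta>1: "\<delta>1 > 0" "\<forall>x\<le>\<delta>1. of_nat 1 * x \<le> Phi a x" by auto
  have "ell d g \<le> ell d g'"
  proof -
    have "ell d g = ell d (dnorm d g)" by (rule ell_dnorm[symmetric])
    also have "\<dots> \<le> ell d g'" unfolding ell_def
    proof (rule Liminf_mono)
      have "eventually (\<lambda>r. dnorm d g r < \<delta>1) (at_right 0)" using dlim \<delta>1(1) by (rule order_tendstoD)
      with ev01 show "\<forall>\<^sub>F x in at_right 0. dnorm d g x / x ^ d \<le> g' x / x ^ d"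
      proof eventually_elim
        case (elim r)
        then have "r < top" using order.strict_trans[OF _ ennreal_one_less_top] by blast
        moreover have "dnorm d g r \<le> Phi a (dnorm d g r)" using \<delta>1(2) elim by simp
        ultimately show ?case by (simp add: g'eq divide_right_mono_ennreal)
      qed
    qed
    finally show ?thesis .
  qed
  then have g'star: "g' \<in> gauge_star d" using ellpos g'gauge by (auto simp: gauge_star_def)
  have "(\<integral>\<^sup>+ r. dnorm d g' (ennreal r) \<partial>M) \<le> (\<integral>\<^sup>+ r. Phi a (\<phi> r) \<partial>M)"
  proof (rule nn_integral_mono)
    fix r assume "r \<in> space M"
    then have r: "0 < ennreal r" "ennreal r < top" by (auto simp: space_M)
    then have "dnorm d g' (ennreal r) \<le> g' (ennreal r)" by (rule dnorm_le)
    then show "dnorm d g' (ennreal r) \<le> Phi a (\<phi> r)" using r by (simp add: g'eq \<phi>_def)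
  qed
  also have "\<dots> = (\<Sum>k. \<integral>\<^sup>+ r. min (\<phi> r) (ennreal (a k)) \<partial>M)"
    unfolding Phi_def by (rule nn_integral_suminf) measurable
  also have "\<dots> \<le> (\<Sum>k. ennreal ((1/2) ^ k))" by (intro suminf_le summableI aint)
  also have "\<dots> = ennreal 2"
  proof -
    have gs: "(\<lambda>k. (1/2::real) ^ k) sums 2" using geometric_sums[of "1/2::real"] by simp
    show ?thesis by (rule suminf_ennreal_eq[OF _ gs]) simp
  qed
  finally have "(\<integral>\<^sup>+ r. dnorm d g' (ennreal r) \<partial>M) \<noteq> \<infinity>" by (auto simp: top_unique)
  then have g'notn: "g' \<notin> gauge_n d M" by (simp add: gauge_n_def)
  obtain b1 where b1: "b1 > 0" "\<And>r. 0 < r \<Longrightarrow> r < b1 \<Longrightarrow> 0 < hinf d g r"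
    using hinf_pos[OF ellpos] by blast
  obtain b2 where b2: "b2 > 0" "\<And>r. 0 < r \<Longrightarrow> r < b2 \<Longrightarrow> g r < 1"
    using g_small[OF g] by blast
  define E where "E = min (min b1 b2) e"
  have E: "E > 0" "E \<le> 1" "E \<le> b1" "E \<le> b2" "E \<le> e" using b1 b2 e by (auto simp: E_def min_le_iff_disj)
  have xprops: "0 < dnorm d g r \<and> dnorm d g r < top \<and> r < top \<and> 0 < hinf d g r \<and> hinf d g r < top"
    if "0 < r" "r < E" for r
  proof -
    have rt: "r < top" using that(2) E(2) by (rule lt1_top)
    have h0: "0 < hinf d g r" using b1 that E by auto
    have "dnorm d g r \<le> g r" using that rt by (intro dnorm_le) auto
    also have "g r < 1" using b2 that E by auto
    finally have xt: "dnorm d g r < top" using ennreal_one_less_top by (rule order.strict_trans)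
    have deq: "dnorm d g r = r ^ d * hinf d g r" using that rt by (intro dnorm_eq) auto
    have "hinf d g r \<noteq> top"
    proof
      assume "hinf d g r = top"
      moreover have "r ^ d * top = top" using pow_nz(1)[OF that(1) rt, of d] by (rule ennreal_top_mult_left)
      ultimately have "dnorm d g r = top" using deq by simp
      then show False using xt by simp
    qed
    then have ht: "hinf d g r < top" by (simp add: less_top)
    have "(0::ennreal) < r ^ d" using pow_nz(1)[OF that(1) rt, of d] zero_less_iff_neq_zero by blast
    then have "0 < dnorm d g r" unfolding deq using h0 by (simp add: ennreal_zero_less_mult_iff)
    then show ?thesis using xt rt h0 ht by blast
  qed
  have xmono: "dnorm d g \<rho> \<le> dnorm d g r" if "0 < \<rho>" "\<rho> \<le> r" "r < E" for \<rho> r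
  proof -
    have "r \<le> \<epsilon>" using that(3) E(5) e(3) by (meson order.trans order_less_imp_le)
    then show ?thesis using that by (intro mono_onD[OF \<epsilon>(2)]) auto
  qed
  have dg': "dnorm d g' r = Phi a (dnorm d g r)" if "0 < r" "r < E" for r
  proof -
    have rt: "r < top" using xprops[OF that] by blast
    have "dnorm d g' r = g' r"
    proof (rule dnorm_eq_self[OF that(1) rt])
      fix \<rho> :: ennreal assume \<rho>: "0 < \<rho>" "\<rho> \<le> r"
      have \<rho>E: "\<rho> < E" using \<rho> that by auto
      note xr = xprops[OF that] and x\<rho> = xprops[OF \<rho>(1) \<rho>E]
      let ?xr = "dnorm d g r" and ?x\<rho> = "dnorm d g \<rho>" and ?hr = "hinf d g r" and ?h\<rho> = "hinf d g \<rho>"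
      have eqr: "?xr = r ^ d * ?hr" using xr that by (intro dnorm_eq) auto
      have eq\<rho>: "?x\<rho> = \<rho> ^ d * ?h\<rho>" using x\<rho> \<rho> by (intro dnorm_eq) auto
      have hle: "?hr \<le> ?h\<rho>" using \<rho>(2) by (rule hinf_anti)
      have "?h\<rho> * (Phi a ?xr * \<rho> ^ d) = Phi a ?xr * ?x\<rho>" using eq\<rho> by (simp add: ac_simps)
      also have "\<dots> \<le> Phi a ?x\<rho> * ?xr" using xmono[OF \<rho> that(2)] by (rule Phi_ratio)
      also have "\<dots> = Phi a ?x\<rho> * (r ^ d * ?hr)" using eqr by simp
      also have "\<dots> \<le> Phi a ?x\<rho> * (r ^ d * ?h\<rho>)" using hle by (intro mult_left_mono) auto
      also have "\<dots> = ?h\<rho> * (Phi a ?x\<rho> * r ^ d)" by (simp add: ac_simps)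
      finally have "Phi a ?xr * \<rho> ^ d \<le> Phi a ?x\<rho> * r ^ d"
        using ennreal_mult_le_mult_iff[of ?h\<rho>] x\<rho> by auto
      then have "Phi a ?xr / r ^ d \<le> Phi a ?x\<rho> / \<rho> ^ d"
        using pow_nz[OF \<rho>(1), of d] pow_nz[OF that(1) rt, of d] x\<rho>
        by (intro div_ratio_le) auto
      then show "g' r / r ^ d \<le> g' \<rho> / \<rho> ^ d" using xr x\<rho> by (simp add: g'eq)
    qed
    then show ?thesis using rt by (simp add: g'eq)
  qed
  have req: "dnorm d g' r / dnorm d g r = Phi a (dnorm d g r) / dnorm d g r" if "0 < r" "r < E" for r
    using dg'[OF that] by simp
  have "gprec (dnorm d g') (dnorm d g)"
  proof (rule gprecI2[OF E(1)])
    fix r s :: ennreal assume rs: "0 < r" "r \<le> s" "s < E"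
    have rE: "r < E" using rs by auto
    note xr = xprops[OF rs(1) rE] and xs = xprops[of s] 
    have s0: "0 < s" using rs by auto
    note xs = xprops[OF s0 rs(3)]
    have "Phi a (dnorm d g s) / dnorm d g s \<le> Phi a (dnorm d g r) / dnorm d g r"
    proof (rule div_ratio_le)
      show "dnorm d g r \<noteq> 0" "dnorm d g r \<noteq> top" "dnorm d g s \<noteq> 0" "dnorm d g s \<noteq> top"
        using xr xs by auto
      show "Phi a (dnorm d g s) * dnorm d g r \<le> Phi a (dnorm d g r) * dnorm d g s"
        using xmono[OF rs(1,2,3)] by (rule Phi_ratio)
    qed
    then show "dnorm d g' s / dnorm d g s \<le> dnorm d g' r / dnorm d g r"
      using req[OF rs(1) rE] req[OF s0 rs(3)] by simp
  next
    show "((\<lambda>r. dnorm d g' r / dnorm d g r) \<longlongrightarrow> top) (at_right 0)"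
      unfolding tendsto_top_iff_ennreal
    proof (intro allI impI)
      fix l :: real assume l: "0 \<le> l"
      obtain N :: nat where N: "l < real N" using reals_Archimedean2 by blast
      have "\<exists>\<delta>>0. \<forall>x\<le>\<delta>. of_nat N * x \<le> Phi a x" by (rule Phi_lower2[OF apos])
      then obtain \<delta> where \<delta>: "\<delta> > 0" "\<forall>x\<le>\<delta>. of_nat N * x \<le> Phi a x" by auto
      have "eventually (\<lambda>r. dnorm d g r < \<delta>) (at_right 0)" using dlim \<delta>(1) by (rule order_tendstoD)
      moreover have "eventually (\<lambda>r. 0 < r \<and> r < E) (at_right 0)"
        unfolding ev_at_right0 using E(1) by blast
      ultimately show "eventually (\<lambda>r. ennreal l < dnorm d g' r / dnorm d g r) (at_right 0)"
      proof eventually_elim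
        case (elim r)
        have xr: "0 < dnorm d g r" "dnorm d g r < top" using xprops[of r] elim by auto
        then have x: "dnorm d g r \<noteq> 0" "dnorm d g r \<noteq> top" by auto
        have "of_nat N * dnorm d g r \<le> Phi a (dnorm d g r)" using elim \<delta>(2) by auto
        then have "of_nat N \<le> Phi a (dnorm d g r) / dnorm d g r" using le_ediv_iff[OF x] by blast
        moreover have "ennreal l < of_nat N" using N l
          by (simp add: ennreal_of_nat_eq_real_of_nat ennreal_less_iff)
        ultimately show ?case using req elim by simp
      qed
    qed
  qed
  then show ?thesis using g'star g'notn by blast
qed

end


theorem lemma7p9:
  fixes d :: nat and M :: "real measure"
  assumes "M \<in> meas_Rd d"
  shows "left_open d (gauge_star d - gauge_n d M) \<and>
         right_open d (gauge_n d M) \<and> gauge_n d M \<noteq> {}"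
proof -
  interpret MR d M using assms by unfold_locales
  have sub: "gauge_n d M \<subseteq> gauge_inf d" by (auto simp: gauge_n_def)
  show ?thesis
    unfolding left_open_def right_open_def
    using dnorm_compl dnorm_gauge_n left_step right_step nonempty sub by blast
qed

end
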